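(* Let $F$ be an algebraically closed field of characteristic $\neq 2$, $R=F[t]$ with the involution ${}^*$ described in the context, and let $A\in M_2(R)$ satisfy $A^*=-A$, $\det(A)\neq 0$ and $\gcd(A)=1$. Then $A$ is congruent to a matrix with zero diagonal, i.e. there is $S\in\mathrm{GL}_2(R)$ such that both diagonal entries of $S^*AS$ are $0$.
   Context: $R=F[t]$ is the polynomial ring over $F$, and ${}^*$ is the $F$-algebra involution of $R$ that is the identity on $F$ and sends $t$ to $-t$. For $A=(a_{ij})\in M_n(R)$, $A^*$ is the matrix whose $(i,j)$ entry is $a_{ji}^*$. $A$ is skew-hermitian if $A^*=-A$. Congruence: $B=S^*AS$ for some $S\in\mathrm{GL}_n(R)$. $\gcd(A)$ denotes the monic generator (or $0$) of the ideal of $R$ generated by all entries of $A$. *)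

theory Defs
  imports "HOL-Analysis.Analysis" "HOL-Computational_Algebra.Polynomial_Factorial"
begin

definition poly_inv :: "'a::comm_ring_1 poly \<Rightarrow> 'a poly" where
  "poly_inv p = pcompose p [:0, -1:]"

definition mat_star :: "'a::comm_ring_1 poly ^ 'n ^ 'm \<Rightarrow> 'a poly ^ 'm ^ 'n" where
  "mat_star A = (\<chi> i j. poly_inv (A $ j $ i))"

definition alg_closed_field :: "'a::field itself \<Rightarrow> bool" where
  "alg_closed_field _ \<longleftrightarrow> (\<forall>p::'a poly. degree p \<ge> 1 \<longrightarrow> (\<exists>x. poly p x = 0))"

end

theory Submission
  imports Defs
begin

lemma pinv_add[simp]: "poly_inv (p + q) = poly_inv p + poly_inv q"
  by (simp add: poly_inv_def pcompose_add)
lemma pinv_mult[simp]: "poly_inv (p * q) = poly_inv p * poly_inv q"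
  by (simp add: poly_inv_def pcompose_mult)
lemma pinv_minus[simp]: "poly_inv (- p) = - poly_inv p"
  by (simp add: poly_inv_def pcompose_uminus)
lemma pinv_diff[simp]: "poly_inv (p - q) = poly_inv p - poly_inv q"
  by (simp add: poly_inv_def pcompose_diff)
lemma pinv_const[simp]: "poly_inv [:c:] = [:c:]"
  by (simp add: poly_inv_def)
lemma pinv_0[simp]: "poly_inv 0 = 0"
  by (simp add: poly_inv_def)
lemma pinv_1[simp]: "poly_inv 1 = 1"
  by (simp add: poly_inv_def pcompose_1)
lemma pinv_smult[simp]: "poly_inv (smult c p) = smult c (poly_inv p)"
  by (simp add: poly_inv_def pcompose_smult)
lemma pinv_pinv[simp]: "poly_inv (poly_inv (p::'a::comm_ring_1 poly)) = p"
proof -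
  have "pcompose [:0, -1:] [:0, -1::'a:] = [:0,1:]" by (simp add: pcompose_pCons)
  then show ?thesis by (simp add: poly_inv_def pcompose_assoc[symmetric])
qed
lemma poly_pinv[simp]: "poly (poly_inv p) x = poly p (- x)"
  by (simp add: poly_inv_def poly_pcompose)
lemma degree_pinv[simp]: "degree (poly_inv (p::'a::idom poly)) = degree p"
  by (simp add: poly_inv_def degree_pcompose)
lemma pinv_eq_0_iff[simp]: "poly_inv p = 0 \<longleftrightarrow> p = (0::'a::comm_ring_1 poly)"
  by (metis pinv_0 pinv_pinv)
lemma pinv_power[simp]: "poly_inv (p ^ n) = poly_inv p ^ n"
  by (induct n) auto
lemma pinv_linear[simp]: "poly_inv [:a, b:] = [:a, - b:]"
  by (simp add: poly_inv_def pcompose_pCons)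
lemma pinv_numeral[simp]: "poly_inv (numeral n) = numeral n"
  by (metis pinv_const of_nat_numeral of_nat_poly pinv_const)


definition cop :: "'a::comm_ring_1 \<Rightarrow> 'a \<Rightarrow> bool" where
  "cop x y \<longleftrightarrow> (\<exists>u v. u * x + v * y = 1)"

lemma cop_swap: "cop x y \<Longrightarrow> cop y x"
  unfolding cop_def by (metis add.commute)

lemma cop_gauss_step: "cop x y \<Longrightarrow> cop (y + q*x) (-x)"
  unfolding cop_def
proof (elim exE)
  fix u v assume "u * x + v * y = 1"
  then have "v * (y + q * x) + (v * q - u) * (-x) = 1" by (simp add: algebra_simps)
  then show "\<exists>u v. u * (y + q * x) + v * - x = 1" by blast
qed

definition hf :: "'a::comm_ring_1 poly \<Rightarrow> 'a poly \<Rightarrow> 'a poly \<Rightarrow> 'a poly \<Rightarrow> 'a poly \<Rightarrow> 'a poly \<Rightarrow> 'a poly \<Rightarrow> 'a poly \<Rightarrow> 'a poly" where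
  "hf a b c d x1 y1 x2 y2 = poly_inv x1 * (a*x2 + b*y2) + poly_inv y1 * (c*x2 + d*y2)"

lemma odd_poly_0:
  fixes a :: "'a::field poly"
  assumes "(2::'a) \<noteq> 0" "poly_inv a = -a"
  shows "poly a 0 = 0"
proof -
  have "poly (poly_inv a) 0 = poly (-a) 0" using assms(2) by simp
  then have "poly a 0 = - poly a 0" by simp
  then have "2 * poly a 0 = 0" by (metis add_eq_0_iff2 mult_2)
  with assms(1) show ?thesis by simp
qed

lemma odd_poly_degree:
  fixes a :: "'a::field poly"
  assumes "(2::'a) \<noteq> 0" "poly_inv a = -a" "a \<noteq> 0"
  shows "degree a \<ge> 1"
proof (rule ccontr)
  assume "\<not> degree a \<ge> 1"
  then have "degree a = 0" by simp
  then obtain c where "a = [:c:]" by (metis degree_eq_zeroE)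
  with odd_poly_0[OF assms(1,2)] assms(3) show False by simp
qed

lemma gauss_identity:
  fixes a b d q r x y :: "'a::field poly"
  assumes "poly_inv a = -a" "poly_inv d = -d" "b = a*q + r"
  shows "hf a b (-poly_inv b) d (y + q*x) (-x) (y + q*x) (-x)
       = hf (hf a b (-poly_inv b) d (-q) 1 (-q) 1) (poly_inv r) (- r) a x y x y"
  using assms by (simp add: hf_def algebra_simps)

lemma gauss_det:
  fixes a b d q r :: "'a::field poly"
  assumes "poly_inv a = -a" "poly_inv d = -d" "b = a*q + r"
  shows "hf a b (-poly_inv b) d (-q) 1 (-q) 1 * a + poly_inv r * r = a*d + b*poly_inv b"
  using assms by (simp add: hf_def algebra_simps)

lemma gauss_odd:
  fixes a b d q :: "'a::field poly"
  assumes "poly_inv a = -a" "poly_inv d = -d"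
  shows "poly_inv (hf a b (-poly_inv b) d (-q) 1 (-q) 1) = - hf a b (-poly_inv b) d (-q) 1 (-q) 1"
  using assms by (simp add: hf_def algebra_simps)


lemma degree_norm:
  fixes r :: "'a::field poly"
  shows "degree (poly_inv r * r) = 2 * degree r"
proof (cases "r = 0")
  case True then show ?thesis by simp
next
  case False then show ?thesis by (simp add: degree_mult_eq)
qed

lemma unimod_iso:
  fixes a b d :: "'a::field poly"
  assumes two: "(2::'a) \<noteq> 0"
  shows "poly_inv a = -a \<Longrightarrow> poly_inv d = -d \<Longrightarrow> a * d + b * poly_inv b = [:k:] \<Longrightarrow> k \<noteq> 0 \<Longrightarrow>
    \<exists>x y. cop x y \<and> hf a b (-poly_inv b) d x y x y = 0"
proof (induction "degree a" arbitrary: a b d rule: less_induct)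
  case less
  show ?case
  proof (cases "a = 0")
    case True then show ?thesis
      by (intro exI[of _ 1] exI[of _ 0]) (simp add: hf_def cop_def)
  next
    case False
    have da: "degree a \<ge> 1" using odd_poly_degree[OF two less(2) False] .
    define q where "q = b div a"
    define r where "r = b mod a"
    have br: "b = a * q + r" unfolding q_def r_def by simp
    have dr: "degree r < degree a"
      using degree_mod_less[OF False, of b] da unfolding r_def by auto
    define d' where "d' = hf a b (-poly_inv b) d (-q) 1 (-q) 1"
    have det': "d' * a + poly_inv r * r = [:k:]"
      using gauss_det[OF less(2,3) br] less(4) unfolding d'_def by simp
    have odd': "poly_inv d' = -d'" unfolding d'_def using gauss_odd[OF less(2,3)] .
    have dd: "degree d' < degree a"
    proof (cases "d' = 0")
      case True then show ?thesis using da by simp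
    next
      case dnz: False
      have "degree (d' * a) = degree d' + degree a" using dnz False by (simp add: degree_mult_eq)
      moreover have "d' * a = [:k:] - poly_inv r * r" using det' by (simp add: algebra_simps)
      moreover have "degree ([:k:] - poly_inv r * r) \<le> max (degree [:k:]) (degree (poly_inv r * r))"
        by (rule degree_diff_le_max)
      ultimately have "degree d' + degree a \<le> max 0 (2 * degree r)" by (simp add: degree_norm)
      then show ?thesis using dr da by auto
    qed
    have det'': "d' * a + poly_inv r * poly_inv (poly_inv r) = [:k:]"
      using det' by (simp add: mult.commute)
    obtain x y where xy: "cop x y" "hf d' (poly_inv r) (- poly_inv (poly_inv r)) a x y x y = 0"
      using less.hyps[OF dd odd' less(2) det'' less(5)] by blast
    have "hf a b (-poly_inv b) d (y + q * x) (-x) (y + q * x) (-x) = 0"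
      using gauss_identity[OF less(2,3) br, of y x] xy(2) unfolding d'_def by simp
    then show ?thesis using cop_gauss_step[OF xy(1)] by blast
  qed
qed


lemma hf_skew:
  assumes "poly_inv a = -a" "poly_inv d = -d"
  shows "hf a b (-poly_inv b) d x2 y2 x1 y1 = - poly_inv (hf a b (-poly_inv b) d x1 y1 x2 y2)"
  using assms by (simp add: hf_def algebra_simps)

lemma hf_odd:
  assumes "poly_inv a = -a" "poly_inv d = -d"
  shows "poly_inv (hf a b (-poly_inv b) d x y x y) = - hf a b (-poly_inv b) d x y x y"
  using assms by (simp add: hf_def algebra_simps)

lemma hf_lin2: "hf a b c d x1 y1 (x2 + k * x3) (y2 + k * y3) = hf a b c d x1 y1 x2 y2 + k * hf a b c d x1 y1 x3 y3"
  by (simp add: hf_def algebra_simps)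

lemma hf_lin1: "hf a b c d (x1 + k * x3) (y1 + k * y3) x2 y2 = hf a b c d x1 y1 x2 y2 + poly_inv k * hf a b c d x3 y3 x2 y2"
  by (simp add: hf_def algebra_simps)

lemma hf_det:
  "hf a b c d x1 y1 x1 y1 * hf a b c d x2 y2 x2 y2 - hf a b c d x1 y1 x2 y2 * hf a b c d x2 y2 x1 y1
   = poly_inv (x1 * y2 - x2 * y1) * (x1 * y2 - x2 * y1) * (a * d - b * c)"
  by (simp add: hf_def algebra_simps)

lemma half_two: "(2::'a::field) \<noteq> 0 \<Longrightarrow> [:1/2::'a:] * 2 = 1"
proof -
  assume two: "(2::'a) \<noteq> 0"
  have e: "(2::'a poly) = [:2:]" by (metis numeral_One numeral_Bit0 one_pCons add_pCons add_0 pCons_0_0 one_add_one)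
  show ?thesis unfolding e using two by (simp add: one_pCons)
qed

lemma finish:
  fixes a b d :: "'a::field poly"
  assumes two: "(2::'a) \<noteq> 0" and sk: "poly_inv a = -a" "poly_inv d = -d"
    and iso: "hf a b (-poly_inv b) d x1 y1 x1 y1 = 0"
    and cg: "cop (hf a b (-poly_inv b) d x1 y1 x2 y2) (poly_inv (hf a b (-poly_inv b) d x1 y1 x2 y2))"
  shows "\<exists>c. hf a b (-poly_inv b) d (x2 + c * x1) (y2 + c * y1) (x2 + c * x1) (y2 + c * y1) = 0"
proof -
  define H where "H = hf a b (-poly_inv b) d"
  define g where "g = H x1 y1 x2 y2"
  define e where "e = H x2 y2 x2 y2"
  obtain u v where uv: "u * g + v * poly_inv g = 1" using cg unfolding cop_def g_def H_def by blast
  have uv': "poly_inv u * poly_inv g + poly_inv v * g = 1"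
    using arg_cong[OF uv, of poly_inv] by simp
  have eo: "poly_inv e = - e" unfolding e_def H_def by (rule hf_odd[OF sk])
  have g21: "H x2 y2 x1 y1 = - poly_inv g" unfolding g_def H_def by (rule hf_skew[OF sk])
  define h :: "'a poly" where "h = [:1/2:]"
  have h2: "h * 2 = 1" unfolding h_def using two by (rule half_two)
  define c where "c = h * (e * (poly_inv u + v))"
  have pc: "poly_inv c = - h * (e * (u + poly_inv v))"
  proof -
    have "poly_inv c = h * (poly_inv e * (u + poly_inv v))" unfolding c_def h_def by (simp add: add.commute)
    then show ?thesis using eo by simp
  qed
  have "H (x2 + c * x1) (y2 + c * y1) (x2 + c * x1) (y2 + c * y1)
      = e + c * (- poly_inv g) + poly_inv c * (g + c * 0)"
    unfolding H_def hf_lin1 hf_lin2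
    by (fold H_def, simp add: iso[folded H_def] g21 e_def g_def)
  also have "\<dots> = e - h * e * ((u * g + v * poly_inv g) + (poly_inv u * poly_inv g + poly_inv v * g))"
    unfolding pc c_def using eo by (simp add: algebra_simps h_def)
  also have "\<dots> = e - e * (h * 2)" using uv uv' by (simp add: algebra_simps)
  also have "\<dots> = 0" using h2 by simp
  finally show ?thesis unfolding H_def by blast
qed


lemma alg_root:
  fixes p :: "'a::field_gcd poly"
  assumes "alg_closed_field TYPE('a)" "degree p \<ge> 1"
  shows "\<exists>x. poly p x = 0"
  using assms unfolding alg_closed_field_def by blast

lemma cop_root:
  fixes p q :: "'a::field_gcd poly"
  assumes ac: "alg_closed_field TYPE('a)"
  shows "cop p q \<longleftrightarrow> \<not> (\<exists>z. poly p z = 0 \<and> poly q z = 0)"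
proof
  assume "cop p q"
  then obtain u v where uv: "u * p + v * q = 1" unfolding cop_def by blast
  show "\<not> (\<exists>z. poly p z = 0 \<and> poly q z = 0)"
  proof
    assume "\<exists>z. poly p z = 0 \<and> poly q z = 0"
    then obtain z where "poly p z = 0" "poly q z = 0" by blast
    then have "poly (u * p + v * q) z = 0" by simp
    with uv show False by simp
  qed
next
  assume nr: "\<not> (\<exists>z. poly p z = 0 \<and> poly q z = 0)"
  define g where "g = gcd p q"
  have bz: "fst (bezout_coefficients p q) * p + snd (bezout_coefficients p q) * q = g"
    unfolding g_def by (rule bezout_coefficients_fst_snd)
  have gnz: "g \<noteq> 0"
  proof
    assume "g = 0"
    then have "p = 0" "q = 0" unfolding g_def by auto
    with nr show False by simp
  qed
  have dg: "degree g = 0"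
  proof (rule ccontr)
    assume "degree g \<noteq> 0"
    then obtain z where z: "poly g z = 0" using alg_root[OF ac, of g] by auto
    have "g dvd p" "g dvd q" unfolding g_def by auto
    then obtain k l where "p = g * k" "q = g * l" by (auto elim!: dvdE)
    with z nr show False by auto
  qed
  then obtain c where gc: "g = [:c:]" by (metis degree_eq_zeroE)
  with gnz have cnz: "c \<noteq> 0" by simp
  have "[:1/c:] * g = 1" using gc cnz by (simp add: one_pCons)
  then have "([:1/c:] * fst (bezout_coefficients p q)) * p + ([:1/c:] * snd (bezout_coefficients p q)) * q = 1"
    using bz by (metis distrib_left mult.assoc)
  then show "cop p q" unfolding cop_def by blast
qed

lemma alg_infinite:
  assumes ac: "alg_closed_field TYPE('a::field_gcd)"
  shows "infinite (UNIV :: 'a set)"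
proof
  assume fin: "finite (UNIV :: 'a set)"
  define p :: "'a poly" where "p = (\<Prod>c\<in>UNIV. [:-c, 1:]) + 1"
  have d1: "degree (\<Prod>c\<in>(UNIV::'a set). [:-c, 1:]) = card (UNIV :: 'a set)"
    by (subst degree_prod_eq_sum_degree) auto
  have "card (UNIV :: 'a set) \<ge> 1" using fin by (simp add: Suc_le_eq card_gt_0_iff)
  then have "degree p \<ge> 1" unfolding p_def using d1
    by (subst degree_add_eq_left) auto
  then obtain z where z: "poly p z = 0" using alg_root[OF ac] by blast
  have "poly (\<Prod>c\<in>(UNIV::'a set). [:-c, 1:]) z = 0"
    unfolding poly_prod using fin by (intro prod_zero) auto
  then show False using z unfolding p_def by simp
qed

lemma avoid_finite:
  assumes "infinite (UNIV :: 'a set)" "finite (B :: 'a set)"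
  shows "\<exists>e. e \<notin> B"
  using assms ex_new_if_finite by blast


lemma factor_even:
  fixes P :: "'a::field_gcd poly"
  assumes ac: "alg_closed_field TYPE('a)" and two: "(2::'a) \<noteq> 0"
  shows "poly_inv P = P \<Longrightarrow> poly P 0 \<noteq> 0 \<Longrightarrow>
    \<exists>\<beta> l. l \<noteq> 0 \<and> \<beta> * poly_inv \<beta> = smult l P \<and> (\<forall>z. poly \<beta> z = 0 \<longrightarrow> poly \<beta> (-z) \<noteq> 0)"
proof (induction "degree P" arbitrary: P rule: less_induct)
  case less
  show ?case
  proof (cases "degree P = 0")
    case True
    then obtain c where Pc: "P = [:c:]" by (metis degree_eq_zeroE)
    with less(3) have "c \<noteq> 0" by simp
    then show ?thesis
      by (intro exI[of _ 1] exI[of _ "1/c"]) (simp add: Pc one_pCons)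
  next
    case False
    then obtain \<tau> where t: "poly P \<tau> = 0" using alg_root[OF ac, of P] by auto
    have tnz: "\<tau> \<noteq> 0" using t less(3) by auto
    have t2: "\<tau> + \<tau> \<noteq> 0" using tnz two by (metis mult_2 mult_eq_0_iff)
    have t': "poly P (-\<tau>) = 0" using t arg_cong[OF less(2), of "\<lambda>p. poly p \<tau>"] by simp
    define L1 :: "'a poly" where "L1 = [:-\<tau>, 1:]"
    define L2 :: "'a poly" where "L2 = [:\<tau>, 1:]"
    obtain P1 where P1: "P = L1 * P1" using t unfolding L1_def poly_eq_0_iff_dvd by (auto elim!: dvdE)
    have "poly P1 (-\<tau>) = 0" using t' t2 unfolding P1 L1_def by (simp add: add.commute)
    then obtain Q where Q: "P1 = L2 * Q" unfolding L2_def using dvd_iff_poly_eq_0[of \<tau> P1] by (auto elim!: dvdE)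
    have PQ: "P = (L1 * L2) * Q" using P1 Q by (simp add: mult.assoc)
    have L12nz: "L1 * L2 \<noteq> 0" unfolding L1_def L2_def by simp
    have iL1: "poly_inv L1 = - L2" and iL2: "poly_inv L2 = - L1" unfolding L1_def L2_def by simp_all
    have "(L1 * L2) * poly_inv Q = (L1 * L2) * Q"
      using less(2) unfolding PQ by (simp add: iL1 iL2 algebra_simps)
    then have Qi: "poly_inv Q = Q" using L12nz by simp
    have Q0: "poly Q 0 \<noteq> 0" using less(3) unfolding PQ by simp
    have Qnz: "Q \<noteq> 0" using Q0 by auto
    have "degree P = degree (L1 * L2) + degree Q" unfolding PQ using L12nz Qnz by (rule degree_mult_eq)
    moreover have "degree (L1 * L2) = 2" unfolding L1_def L2_def by (simp add: degree_mult_eq)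
    ultimately have dQ: "degree Q < degree P" by simp
    obtain \<beta> l where b: "l \<noteq> 0" "\<beta> * poly_inv \<beta> = smult l Q"
        "\<forall>z. poly \<beta> z = 0 \<longrightarrow> poly \<beta> (-z) \<noteq> 0"
      using less.hyps[OF dQ Qi Q0] by blast
    show ?thesis
    proof (cases "poly \<beta> (-\<tau>) = 0")
      case True
      then have bt: "poly \<beta> \<tau> \<noteq> 0" using b(3) by fastforce
      show ?thesis
      proof (intro exI[of _ "L2 * \<beta>"] exI[of _ "-l"] conjI allI impI)
        show "- l \<noteq> 0" using b(1) by simp
        show "L2 * \<beta> * poly_inv (L2 * \<beta>) = smult (- l) P"
          using b(2) unfolding PQ by (simp add: iL2 algebra_simps)
        fix z assume z: "poly (L2 * \<beta>) z = 0"
        show "poly (L2 * \<beta>) (- z) \<noteq> 0"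
        proof (cases "z = -\<tau>")
          case True then show ?thesis using bt t2 unfolding L2_def by simp
        next
          case False
          have e: "poly (L2 * \<beta>) z = (z + \<tau>) * poly \<beta> z" by (simp add: L2_def algebra_simps)
          have "z + \<tau> \<noteq> 0" using False by (metis add_eq_0_iff2)
          then have "poly \<beta> z = 0" using z unfolding e by simp
          then have "poly \<beta> (-z) \<noteq> 0" using b(3) by blast
          moreover have "z \<noteq> \<tau>" using bt \<open>poly \<beta> z = 0\<close> by auto
          ultimately show ?thesis unfolding L2_def by simp
        qed
      qed
    next
      case False
      show ?thesis
      proof (intro exI[of _ "L1 * \<beta>"] exI[of _ "-l"] conjI allI impI)
        show "- l \<noteq> 0" using b(1) by simp
        show "L1 * \<beta> * poly_inv (L1 * \<beta>) = smult (- l) P"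
          using b(2) unfolding PQ by (simp add: iL1 algebra_simps)
        fix z assume z: "poly (L1 * \<beta>) z = 0"
        show "poly (L1 * \<beta>) (- z) \<noteq> 0"
        proof (cases "z = \<tau>")
          case True then show ?thesis using False t2 unfolding L1_def by (simp add: add.commute)
        next
          case zt: False
          then have "poly \<beta> z = 0" using z unfolding L1_def by auto
          then have "poly \<beta> (-z) \<noteq> 0" using b(3) by blast
          moreover have "z \<noteq> -\<tau>" using False \<open>poly \<beta> z = 0\<close> by auto
          moreover have "poly (L1 * \<beta>) (-z) = - (z + \<tau>) * poly \<beta> (-z)" by (simp add: L1_def algebra_simps)
          moreover have "z + \<tau> \<noteq> 0" using \<open>z \<noteq> -\<tau>\<close> by (metis add_eq_0_iff2)
          ultimately show ?thesis by (metis mult_eq_0_iff neg_equal_0_iff_equal)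
        qed
      qed
    qed
  qed
qed


lemma gram_entry:
  fixes S A :: "'a::comm_ring_1 poly ^ 2 ^ 2"
  shows "(mat_star S ** A ** S) $ i $ j = hf (A$1$1) (A$1$2) (A$2$1) (A$2$2) (S$1$i) (S$2$i) (S$1$j) (S$2$j)"
  by (simp add: matrix_matrix_mult_def mat_star_def sum_2 hf_def algebra_simps)

definition mk2 :: "'a \<Rightarrow> 'a \<Rightarrow> 'a \<Rightarrow> 'a \<Rightarrow> 'a ^ 2 ^ 2" where
  "mk2 a b c d = (\<chi> i j. if i = 1 then (if j = 1 then a else b) else (if j = 1 then c else d))"

lemma mk2_nth[simp]: "mk2 a b c d $ 1 $ 1 = a" "mk2 a b c d $ 1 $ 2 = b"
  "mk2 a b c d $ 2 $ 1 = c" "mk2 a b c d $ 2 $ 2 = d"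
  by (simp_all add: mk2_def)

lemma invertible_mk2:
  fixes a b c d :: "'a::comm_ring_1"
  assumes "a * d - b * c = 1"
  shows "invertible (mk2 a b c d)"
  unfolding invertible_def
proof (intro exI[of _ "mk2 d (-b) (-c) a"] conjI)
  show "mk2 a b c d ** mk2 d (- b) (- c) a = mat 1"
    using assms by (simp add: vec_eq_iff forall_2 matrix_matrix_mult_def sum_2 mat_def algebra_simps)
  show "mk2 d (- b) (- c) a ** mk2 a b c d = mat 1"
    using assms by (simp add: vec_eq_iff forall_2 matrix_matrix_mult_def sum_2 mat_def algebra_simps)
qed


lemma cop_mult_left: "cop a y \<Longrightarrow> cop b y \<Longrightarrow> cop (a * b) y"
  unfolding cop_def
proof (elim exE)
  fix u1 v1 u2 v2 assume h: "u1 * a + v1 * y = 1" "u2 * b + v2 * y = 1"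
  have "(u1 * a + v1 * y) * (u2 * b + v2 * y) = 1" using h by simp
  then have "(u1 * u2) * (a * b) + (u1 * a * v2 + v1 * (u2 * b + v2 * y)) * y = 1"
    by (simp add: algebra_simps)
  then show "\<exists>u v. u * (a * b) + v * y = 1" by blast
qed

lemma cop_basis:
  assumes d: "X1 * Y2 - X2 * Y1 = 1" and c: "cop p q"
  shows "cop (p * X1 + q * X2) (p * Y1 + q * Y2)"
proof -
  obtain u v where uv: "u * p + v * q = 1" using c unfolding cop_def by blast
  have "(u * Y2 - v * Y1) * (p * X1 + q * X2) + (v * X1 - u * X2) * (p * Y1 + q * Y2)
      = (u * p + v * q) * (X1 * Y2 - X2 * Y1)" by (simp add: algebra_simps)
  then show ?thesis using uv d unfolding cop_def by auto
qed

lemma cop_complete: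
  assumes "cop x y" shows "\<exists>x2 y2. x * y2 - x2 * y = 1"
proof -
  obtain u v where "u * x + v * y = 1" using assms unfolding cop_def by blast
  then have "x * u - (- v) * y = 1" by (simp add: algebra_simps)
  then show ?thesis by blast
qed

lemma det1_cop1: "x1 * y2 - x2 * y1 = 1 \<Longrightarrow> cop x1 y1"
  unfolding cop_def by (rule exI[of _ y2], rule exI[of _ "-x2"]) (simp add: algebra_simps)

lemma det1_cop2: "x1 * y2 - x2 * y1 = 1 \<Longrightarrow> cop y1 y2"
  unfolding cop_def by (rule exI[of _ "-x2"], rule exI[of _ x1]) (simp add: algebra_simps)

lemma hf_comb2: "hf a b c d p q (\<alpha> * X1 + \<gamma> * X2) (\<alpha> * Y1 + \<gamma> * Y2)
   = \<alpha> * hf a b c d p q X1 Y1 + \<gamma> * hf a b c d p q X2 Y2"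
  by (simp add: hf_def algebra_simps)

lemma hf_expand: "hf a b c d (\<alpha> * X1 + \<gamma> * X2) (\<alpha> * Y1 + \<gamma> * Y2) (\<alpha> * X1 + \<gamma> * X2) (\<alpha> * Y1 + \<gamma> * Y2)
   = poly_inv \<alpha> * \<alpha> * hf a b c d X1 Y1 X1 Y1 + poly_inv \<alpha> * \<gamma> * hf a b c d X1 Y1 X2 Y2
     + poly_inv \<gamma> * \<alpha> * hf a b c d X2 Y2 X1 Y1 + poly_inv \<gamma> * \<gamma> * hf a b c d X2 Y2 X2 Y2"
  by (simp add: hf_def algebra_simps)

lemma norm_const:
  fixes m :: "'a::field poly"
  assumes "m * poly_inv m = [:c:]" "c \<noteq> 0"
  shows "\<exists>m0. m = [:m0:] \<and> m0 \<noteq> 0"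
proof -
  have "degree (poly_inv m * m) = 0" using assms(1) by (simp add: mult.commute)
  then have "degree m = 0" by (simp add: degree_norm)
  then obtain m0 where "m = [:m0:]" by (metis degree_eq_zeroE)
  moreover have "m0 \<noteq> 0" using assms calculation by auto
  ultimately show ?thesis by blast
qed

lemma cop_const_mult:
  fixes \<beta> :: "'a::field poly"
  assumes "cop \<beta> (poly_inv \<beta>)" "m0 \<noteq> 0"
  shows "cop (\<beta> * [:m0:]) (poly_inv (\<beta> * [:m0:]))"
proof -
  obtain u v where uv: "u * \<beta> + v * poly_inv \<beta> = 1" using assms(1) unfolding cop_def by blast
  have "(u * [:1/m0:]) * (\<beta> * [:m0:]) + (v * [:1/m0:]) * poly_inv (\<beta> * [:m0:])
        = (u * \<beta> + v * poly_inv \<beta>) * ([:1/m0:] * [:m0:])" by (simp add: algebra_simps)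
  also have "[:1/m0:] * [:m0:] = (1 :: 'a poly)" using assms(2) by (simp add: one_pCons)
  finally have "(u * [:1/m0:]) * (\<beta> * [:m0:]) + (v * [:1/m0:]) * poly_inv (\<beta> * [:m0:]) = 1"
    using uv by simp
  then show ?thesis unfolding cop_def by blast
qed


lemma hf_skew':
  assumes "poly_inv a = -a" "poly_inv d = -d"
  shows "hf a b (-poly_inv b) d p q r s = - poly_inv (hf a b (-poly_inv b) d r s p q)"
  using assms by (simp add: hf_def algebra_simps)

lemma unimod_choose:
  fixes a b d \<gamma> :: "'a::field_gcd poly"
  assumes ac: "alg_closed_field TYPE('a)" and two: "(2::'a) \<noteq> 0"
    and sk: "poly_inv a = -a" "poly_inv d = -d" and det: "a * d + b * poly_inv b = [:l:]" "l \<noteq> 0"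
    and gnz: "\<gamma> \<noteq> 0"
  shows "\<exists>x y. cop x y \<and> cop y \<gamma> \<and> hf a b (-poly_inv b) d x y x y = 0"
proof -
  define H where "H = hf a b (-poly_inv b) d"
  obtain x1 y1 where v1: "cop x1 y1" "H x1 y1 x1 y1 = 0"
    using unimod_iso[OF two sk det] unfolding H_def by blast
  obtain x2 y2 where d12: "x1 * y2 - x2 * y1 = 1" using cop_complete[OF v1(1)] by blast
  define \<kappa> where "\<kappa> = H x1 y1 x2 y2"
  have k21: "H x2 y2 x1 y1 = - poly_inv \<kappa>" unfolding \<kappa>_def H_def by (rule hf_skew[OF sk])
  have "H x1 y1 x1 y1 * H x2 y2 x2 y2 - H x1 y1 x2 y2 * H x2 y2 x1 y1
      = poly_inv (x1 * y2 - x2 * y1) * (x1 * y2 - x2 * y1) * (a * d - b * (-poly_inv b))"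
    unfolding H_def by (rule hf_det)
  then have "\<kappa> * poly_inv \<kappa> = [:l:]" using v1(2) k21 d12 det(1) unfolding \<kappa>_def[symmetric] by simp
  then obtain k0 where k0: "\<kappa> = [:k0:]" "k0 \<noteq> 0" using norm_const det(2) by blast
  have "cop (1 * [:k0:]) (poly_inv (1 * [:k0:]))"
    by (rule cop_const_mult) (auto simp: cop_def k0(2) intro: exI[of _ 1] exI[of _ 0])
  then have ck: "cop \<kappa> (poly_inv \<kappa>)" using k0 by simp
  obtain c where c: "H (x2 + c * x1) (y2 + c * y1) (x2 + c * x1) (y2 + c * y1) = 0"
    using finish[OF two sk v1(2)[unfolded H_def]] ck unfolding \<kappa>_def H_def by blast
  define X2 where "X2 = x2 + c * x1"
  define Y2 where "Y2 = y2 + c * y1"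
  have D: "x1 * Y2 - X2 * y1 = 1" using d12 unfolding X2_def Y2_def by (simp add: algebra_simps)
  have h12: "H x1 y1 X2 Y2 = \<kappa>" unfolding X2_def Y2_def H_def hf_lin2
    using v1(2) unfolding H_def \<kappa>_def by simp
  have h21: "H X2 Y2 x1 y1 = - \<kappa>" using hf_skew'[OF sk, where p=X2 and q=Y2 and r=x1 and s=y1] h12 k0
    unfolding H_def by simp
  have h22: "H X2 Y2 X2 Y2 = 0" using c unfolding X2_def Y2_def .
  have iso: "H (1 * x1 + [:e:] * X2) (1 * y1 + [:e:] * Y2) (1 * x1 + [:e:] * X2) (1 * y1 + [:e:] * Y2) = 0" for e
    unfolding H_def hf_expand using v1(2) h12 h21 h22 unfolding H_def by simp
  have cx: "cop (x1 + [:e:] * X2) (y1 + [:e:] * Y2)" for e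
    by (rule det1_cop1[of _ Y2 X2]) (use D in \<open>simp add: algebra_simps\<close>)
  have cy: "cop y1 Y2" using det1_cop2[OF D] .
  define B where "B = (\<lambda>z. - poly y1 z / poly Y2 z) ` {z. poly \<gamma> z = 0}"
  have "finite B" unfolding B_def using poly_roots_finite[OF gnz] by simp
  then obtain e where e: "e \<notin> B" using avoid_finite[OF alg_infinite[OF ac]] by blast
  have "cop (y1 + [:e:] * Y2) \<gamma>"
    unfolding cop_root[OF ac]
  proof
    assume "\<exists>z. poly (y1 + [:e:] * Y2) z = 0 \<and> poly \<gamma> z = 0"
    then obtain z where z: "poly y1 z + e * poly Y2 z = 0" "poly \<gamma> z = 0" by auto
    show False
    proof (cases "poly Y2 z = 0")
      case True
      then have "poly y1 z = 0" using z by simp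
      with True cy show False unfolding cop_root[OF ac] by blast
    next
      case False
      then have "e = - poly y1 z / poly Y2 z" using z(1) by (simp add: field_simps add_eq_0_iff2)
      then have "e \<in> B" unfolding B_def using z(2) by blast
      with e show False by blast
    qed
  qed
  then show ?thesis using cx[of e] iso[of e] unfolding H_def by (intro exI) auto
qed


lemma main_hf:
  fixes a b d :: "'a::field_gcd poly"
  assumes ac: "alg_closed_field TYPE('a)" and two: "(2::'a) \<noteq> 0"
    and sk: "poly_inv a = -a" "poly_inv d = -d"
    and Pnz: "a * d + b * poly_inv b \<noteq> 0"
    and nr: "\<And>z. \<not> (poly a z = 0 \<and> poly b z = 0 \<and> poly (- poly_inv b) z = 0 \<and> poly d z = 0)"
  shows "\<exists>x1 y1 x2 y2. x1 * y2 - x2 * y1 = 1 \<and> hf a b (-poly_inv b) d x1 y1 x1 y1 = 0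
            \<and> hf a b (-poly_inv b) d x2 y2 x2 y2 = 0"
proof -
  define P where "P = a * d + b * poly_inv b"
  define H where "H = hf a b (-poly_inv b) d"
  have Pnz': "P \<noteq> 0" using Pnz unfolding P_def .
  have Pi: "poly_inv P = P" unfolding P_def using sk by (simp add: mult.commute)
  have P0: "poly P 0 \<noteq> 0"
  proof
    assume "poly P 0 = 0"
    moreover have "poly a 0 = 0" "poly d 0 = 0" using odd_poly_0[OF two] sk by auto
    ultimately have "poly b 0 * poly b 0 = 0" unfolding P_def by simp
    then have "poly b 0 = 0" by simp
    with \<open>poly a 0 = 0\<close> \<open>poly d 0 = 0\<close> nr[of 0] show False by simp
  qed
  obtain \<beta> l where bl: "l \<noteq> 0" "\<beta> * poly_inv \<beta> = smult l P"
      "\<forall>z. poly \<beta> z = 0 \<longrightarrow> poly \<beta> (-z) \<noteq> 0"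
    using factor_even[OF ac two Pi P0] by blast
  have cb: "cop \<beta> (poly_inv \<beta>)" unfolding cop_root[OF ac] using bl(3) by auto
  have bnz: "\<beta> \<noteq> 0" using bl(1,2) Pnz' by auto
  have Pl: "P = smult (1/l) (\<beta> * poly_inv \<beta>)" using bl(1,2) by simp
  \<comment> \<open>kernel vector of A modulo P\<close>
  define f where "f = (\<lambda>z. if poly b z \<noteq> 0 then poly d z / poly b z else - poly b (-z) / poly a z)"
  define B where "B = f ` {z. poly P z = 0}"
  have "finite B" unfolding B_def using poly_roots_finite[OF Pnz'] by simp
  then obtain k where k: "k \<notin> B" using avoid_finite[OF alg_infinite[OF ac]] by blast
  define X2 where "X2 = d - b * [:k:]"
  define Y2 where "Y2 = poly_inv b + a * [:k:]"
  have c2: "cop X2 Y2"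
    unfolding cop_root[OF ac]
  proof
    assume "\<exists>z. poly X2 z = 0 \<and> poly Y2 z = 0"
    then obtain z where z: "poly d z = poly b z * k" "poly b (-z) = - poly a z * k"
      unfolding X2_def Y2_def by (auto simp: algebra_simps add_eq_0_iff2)
    have "poly P z = 0" unfolding P_def using z by (simp add: algebra_simps)
    show False
    proof (cases "poly b z \<noteq> 0")
      case True
      then have "k = f z" unfolding f_def using z by simp
      with \<open>poly P z = 0\<close> k show False unfolding B_def by blast
    next
      case False
      show False
      proof (cases "poly a z \<noteq> 0")
        case True
        then have "k = f z" unfolding f_def using z False by simp
        with \<open>poly P z = 0\<close> k show False unfolding B_def by blast
      next
        case False2: False
        then show False using nr[of z] z False by simp
      qed
    qed
  qed
  have hfw: "H p q X2 Y2 = P * (poly_inv p + poly_inv q * [:k:])" for p q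
    unfolding H_def hf_def P_def X2_def Y2_def by (simp add: algebra_simps)
  obtain u v where uv: "u * X2 + v * Y2 = 1" using c2 unfolding cop_def by blast
  define X1 where "X1 = v"
  define Y1 where "Y1 = - u"
  have D1: "X1 * Y2 - X2 * Y1 = 1" using uv unfolding X1_def Y1_def by (simp add: algebra_simps)
  define q1 where "q1 = H X1 Y1 X1 Y1"
  define \<theta> where "\<theta> = poly_inv X1 + poly_inv Y1 * [:k:]"
  define \<eta> where "\<eta> = poly_inv X2 + poly_inv Y2 * [:k:]"
  have h12: "H X1 Y1 X2 Y2 = P * \<theta>" unfolding \<theta>_def by (rule hfw)
  have h22: "H X2 Y2 X2 Y2 = P * \<eta>" unfolding \<eta>_def by (rule hfw)
  have h21: "H X2 Y2 X1 Y1 = - (P * poly_inv \<theta>)"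
    using hf_skew'[OF sk, where p=X2 and q=Y2 and r=X1 and s=Y1] h12 Pi unfolding H_def by simp
  have q1o: "poly_inv q1 = - q1" unfolding q1_def H_def by (rule hf_odd[OF sk])
  have "poly_inv (P * \<eta>) = - (P * \<eta>)" unfolding h22[symmetric] H_def by (rule hf_odd[OF sk])
  then have "P * poly_inv \<eta> = P * (- \<eta>)" using Pi by simp
  then have eo: "poly_inv \<eta> = - \<eta>" by (rule mult_left_cancel[OF Pnz', THEN iffD1])
  have "H X1 Y1 X1 Y1 * H X2 Y2 X2 Y2 - H X1 Y1 X2 Y2 * H X2 Y2 X1 Y1
      = poly_inv (X1 * Y2 - X2 * Y1) * (X1 * Y2 - X2 * Y1) * (a * d - b * (-poly_inv b))"
    unfolding H_def by (rule hf_det)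
  then have "P * (q1 * \<eta> + P * (\<theta> * poly_inv \<theta>)) = P * 1"
    unfolding q1_def[symmetric] h12 h22 h21 D1 P_def by (simp add: algebra_simps)
  then have dC0: "q1 * \<eta> + P * (\<theta> * poly_inv \<theta>) = 1" using Pnz' by simp
  define Ca where "Ca = smult l q1"
  define Cb where "Cb = \<beta> * \<theta>"
  have Cao: "poly_inv Ca = - Ca" unfolding Ca_def using q1o by simp
  have dC: "Ca * \<eta> + Cb * poly_inv Cb = [:l:]"
  proof -
    have "Cb * poly_inv Cb = (\<beta> * poly_inv \<beta>) * (\<theta> * poly_inv \<theta>)" unfolding Cb_def by (simp add: mult_ac)
    also have "\<dots> = smult l (P * (\<theta> * poly_inv \<theta>))" using bl(2) by simp
    finally have "Ca * \<eta> + Cb * poly_inv Cb = smult l (q1 * \<eta> + P * (\<theta> * poly_inv \<theta>))"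
      unfolding Ca_def by (simp add: smult_add_right)
    then show ?thesis using dC0 by (simp add: one_pCons)
  qed
  have bi: "poly_inv \<beta> \<noteq> 0" using bnz by simp
  obtain x y where xy: "cop x y" "cop y (poly_inv \<beta>)" "hf Ca Cb (-poly_inv Cb) \<eta> x y x y = 0"
    using unimod_choose[OF ac two Cao eo dC bl(1) bi] by blast
  define Sx where "Sx = (poly_inv \<beta> * x) * X1 + y * X2"
  define Sy where "Sy = (poly_inv \<beta> * x) * Y1 + y * Y2"
  have cS: "cop Sx Sy" unfolding Sx_def Sy_def
    by (rule cop_basis[OF D1], rule cop_mult_left[OF cop_swap[OF xy(2)] xy(1)])
  have isoS: "H Sx Sy Sx Sy = 0"
  proof -
    have n1: "poly_inv (poly_inv \<beta> * x) * (poly_inv \<beta> * x) = smult l P * (poly_inv x * x)"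
    proof -
      have "poly_inv (poly_inv \<beta> * x) * (poly_inv \<beta> * x) = (\<beta> * poly_inv \<beta>) * (poly_inv x * x)"
        by (simp add: mult_ac)
      then show ?thesis using bl(2) by simp
    qed
    have "H Sx Sy Sx Sy = poly_inv (poly_inv \<beta> * x) * (poly_inv \<beta> * x) * q1
        + poly_inv (poly_inv \<beta> * x) * y * H X1 Y1 X2 Y2 + poly_inv y * (poly_inv \<beta> * x) * H X2 Y2 X1 Y1
        + poly_inv y * y * H X2 Y2 X2 Y2"
      unfolding Sx_def Sy_def q1_def H_def by (rule hf_expand)
    also have "\<dots> = P * hf Ca Cb (-poly_inv Cb) \<eta> x y x y"
      unfolding n1 h12 h22 h21
      by (simp add: hf_def Ca_def Cb_def algebra_simps)
    finally have "H Sx Sy Sx Sy = P * hf Ca Cb (-poly_inv Cb) \<eta> x y x y" .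
    then show ?thesis using xy(3) by simp
  qed
  obtain Tx Ty where DT: "Sx * Ty - Tx * Sy = 1" using cop_complete[OF cS] by blast
  define \<gamma> where "\<gamma> = H Sx Sy Tx Ty"
  have g21: "H Tx Ty Sx Sy = - poly_inv \<gamma>"
    unfolding \<gamma>_def H_def by (rule hf_skew'[OF sk])
  have "poly_inv \<beta> dvd H Tx Ty Sx Sy"
  proof -
    have "H Tx Ty Sx Sy = (poly_inv \<beta> * x) * H Tx Ty X1 Y1 + y * H Tx Ty X2 Y2"
      unfolding Sx_def Sy_def H_def by (rule hf_comb2)
    also have "\<dots> = poly_inv \<beta> * (x * H Tx Ty X1 Y1 + y * smult (1/l) \<beta> * (poly_inv Tx + poly_inv Ty * [:k:]))"
      unfolding hfw by (subst Pl) (simp add: algebra_simps)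
    finally show ?thesis by simp
  qed
  then obtain m where m: "poly_inv \<gamma> = poly_inv \<beta> * m" unfolding g21 by (auto elim!: dvdE)
  have gm: "\<gamma> = \<beta> * poly_inv m" using arg_cong[OF m, of poly_inv] by simp
  have "H Sx Sy Sx Sy * H Tx Ty Tx Ty - H Sx Sy Tx Ty * H Tx Ty Sx Sy
      = poly_inv (Sx * Ty - Tx * Sy) * (Sx * Ty - Tx * Sy) * (a * d - b * (-poly_inv b))"
    unfolding H_def by (rule hf_det)
  then have gg: "\<gamma> * poly_inv \<gamma> = P" unfolding isoS \<gamma>_def[symmetric] g21 DT P_def by simp
  have "P * (smult l (poly_inv m * m)) = P * 1"
  proof -
    have "P = (\<beta> * poly_inv \<beta>) * (poly_inv m * m)" using gg unfolding gm by (simp add: mult_ac)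
    then show ?thesis using bl(2) by (simp add: mult_ac)
  qed
  then have "smult l (poly_inv m * m) = 1" by (rule mult_left_cancel[OF Pnz', THEN iffD1])
  then have "smult (1/l) (smult l (poly_inv m * m)) = smult (1/l) 1" by simp
  then have "poly_inv m * poly_inv (poly_inv m) = [:1/l:]" using bl(1) by simp
  then have "\<exists>m0. poly_inv m = [:m0:] \<and> m0 \<noteq> 0" by (rule norm_const) (use bl(1) in simp)
  then obtain m0 where m0: "poly_inv m = [:m0:]" "m0 \<noteq> 0" by blast
  have cg: "cop \<gamma> (poly_inv \<gamma>)" unfolding gm m0(1) by (rule cop_const_mult[OF cb m0(2)])
  obtain c where c: "H (Tx + c * Sx) (Ty + c * Sy) (Tx + c * Sx) (Ty + c * Sy) = 0"
    using finish[OF two sk isoS[unfolded H_def]] cg unfolding \<gamma>_def H_def by blast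
  have "Sx * (Ty + c * Sy) - (Tx + c * Sx) * Sy = 1" using DT by (simp add: algebra_simps)
  then show ?thesis using isoS c unfolding H_def by blast
qed


theorem proposition3p3:
  fixes A :: "'a::field_gcd poly ^ 2 ^ 2"
  assumes "alg_closed_field TYPE('a)"
    and "(2::'a) \<noteq> 0"
    and "mat_star A = - A"
    and "det A \<noteq> 0"
    and "Gcd {A $ i $ j | i j. True} = 1"
  shows "\<exists>S :: 'a poly ^ 2 ^ 2. invertible S \<and>
           (\<forall>i. (mat_star S ** A ** S) $ i $ i = 0)"
proof -
  have ms: "poly_inv (A $ j $ i) = - A $ i $ j" for i j
  proof -
    have "(mat_star A) $ i $ j = (- A) $ i $ j" using assms(3) by simp
    then show ?thesis by (simp add: mat_star_def)
  qed
  define a where "a = A $ 1 $ 1"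
  define b where "b = A $ 1 $ 2"
  define d where "d = A $ 2 $ 2"
  have sa: "poly_inv a = - a" unfolding a_def using ms[of 1 1] .
  have sd: "poly_inv d = - d" unfolding d_def using ms[of 2 2] .
  have c: "A $ 2 $ 1 = - poly_inv b" unfolding b_def using ms[of 1 2] by simp
  have Pnz: "a * d + b * poly_inv b \<noteq> 0"
    using assms(4) unfolding det_2 c a_def b_def d_def by simp
  have nr: "\<not> (poly a z = 0 \<and> poly b z = 0 \<and> poly (- poly_inv b) z = 0 \<and> poly d z = 0)" for z
  proof
    assume z: "poly a z = 0 \<and> poly b z = 0 \<and> poly (- poly_inv b) z = 0 \<and> poly d z = 0"
    have "[:-z, 1:] dvd Gcd {A $ i $ j | i j. True}"
    proof (rule Gcd_greatest)
      fix e assume "e \<in> {A $ i $ j | i j. True}"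
      then obtain i j where e: "e = A $ i $ j" by blast
      have "poly (A $ i $ j) z = 0"
        using z exhaust_2[of i] exhaust_2[of j] unfolding a_def b_def d_def
        by (auto simp: c b_def)
      then show "[:-z, 1:] dvd e" unfolding e by (simp add: poly_eq_0_iff_dvd)
    qed
    then have "[:-z, 1:] dvd (1 :: 'a poly)" using assms(5) by simp
    then have "degree [:-z, 1:] \<le> degree (1 :: 'a poly)" by (rule dvd_imp_degree) auto
    then show False by simp
  qed
  obtain x1 y1 x2 y2 where xy: "x1 * y2 - x2 * y1 = 1" "hf a b (-poly_inv b) d x1 y1 x1 y1 = 0"
      "hf a b (-poly_inv b) d x2 y2 x2 y2 = 0"
    using main_hf[OF assms(1,2) sa sd Pnz nr] by blast
  define S where "S = mk2 x1 x2 y1 y2"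
  have "invertible S" unfolding S_def by (rule invertible_mk2) (use xy(1) in simp)
  moreover have "\<forall>i. (mat_star S ** A ** S) $ i $ i = 0"
    unfolding forall_2 gram_entry S_def using xy(2,3)
    by (simp add: c a_def[symmetric] b_def[symmetric] d_def[symmetric])
  ultimately show ?thesis by blast
qed

end
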